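(* Let $p\ge3$. Let $m,s,n,j$ be integers and $E$ a real number. If $0\le m<n$, $0\le s<n$, $1<E$, and $|j|>p^{En}$, then $l_\Gamma(t^{-m}a^jt^s)>(E-1)n$.
   Context: $G=BS(1,p)=\langle a,t\mid tat^{-1}=a^p\rangle$ with generating set $\{a^{\pm1},t^{\pm1}\}$; for a word $v$, $l_\Gamma(v)$ denotes the word length (length of a geodesic representative in the Cayley graph) of the element of $G$ represented by $v$. *)

theory Defs
  imports Complex_Main
begin

text \<open>The Baumslag--Solitar group BS(1,p) = < a, t | t a t^-1 = a^p >, realised faithfully
  as the group of affine maps x |-> p^k * x + b of the rationals (k :: int, b in Z[1/p]),
  with a = (x |-> x + 1) and t = (x |-> p * x).  The pair (k, b) stands for x |-> p^k x + b,
  and multiplication is composition of maps.\<close>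

type_synonym bs_elt = "int \<times> rat"

definition bs_mult :: "nat \<Rightarrow> bs_elt \<Rightarrow> bs_elt \<Rightarrow> bs_elt" where
  "bs_mult p g h = (fst g + fst h, (of_nat p) powi (fst g) * snd h + snd g)"

definition bs_one :: bs_elt where "bs_one = (0, 0)"

datatype gen = A | A_inv | T | T_inv

fun gen_elt :: "nat \<Rightarrow> gen \<Rightarrow> bs_elt" where
  "gen_elt p A = (0, 1)"
| "gen_elt p A_inv = (0, -1)"
| "gen_elt p T = (1, 0)"
| "gen_elt p T_inv = (-1, 0)"

definition eval_word :: "nat \<Rightarrow> gen list \<Rightarrow> bs_elt" where
  "eval_word p w = foldr (\<lambda>x acc. bs_mult p (gen_elt p x) acc) w bs_one"

definition word_length :: "nat \<Rightarrow> bs_elt \<Rightarrow> nat" where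
  "word_length p g = (LEAST n. \<exists>w. length w = n \<and> eval_word p w = g)"

definition l_Gamma :: "nat \<Rightarrow> gen list \<Rightarrow> nat" where
  "l_Gamma p v = word_length p (eval_word p v)"

definition a_pow_word :: "int \<Rightarrow> gen list" where
  "a_pow_word j = (if 0 \<le> j then replicate (nat j) A else replicate (nat (- j)) A_inv)"

definition tat_word :: "int \<Rightarrow> int \<Rightarrow> int \<Rightarrow> gen list" where
  "tat_word m j s = replicate (nat m) T_inv @ a_pow_word j @ replicate (nat s) T"

end

theory Submission
  imports Defs
begin

lemma eval_cons: "eval_word p (x # w) = bs_mult p (gen_elt p x) (eval_word p w)"
  by (simp add: eval_word_def)

lemma bound_snd:
  assumes "p \<ge> 2"
  shows "\<bar>snd (eval_word p w)\<bar> \<le> (of_nat p :: rat) ^ length w"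
proof (induction w)
  case Nil thus ?case by (simp add: eval_word_def bs_one_def)
next
  case (Cons x w)
  define b where "b = snd (eval_word p w)"
  have IH: "\<bar>b\<bar> \<le> of_nat p ^ length w" using Cons b_def by simp
  have pp: "(1::rat) \<le> of_nat p ^ length w" using assms by simp
  have p2: "(2::rat) \<le> of_nat p" using assms by simp
  have pw: "(of_nat p :: rat) ^ length (x # w) = of_nat p * of_nat p ^ length w" by simp
  show ?case
  proof (cases x)
    case A
    have "\<bar>b + 1\<bar> \<le> of_nat p ^ length w + 1" using IH by linarith
    also have "\<dots> \<le> of_nat p * of_nat p ^ length w"
    proof -
      have "2 * of_nat p ^ length w \<le> of_nat p * (of_nat p ^ length w :: rat)"
        using p2 pp by (intro mult_right_mono) auto
      thus ?thesis using pp by linarith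
    qed
    finally show ?thesis using A by (simp add: eval_cons bs_mult_def b_def)
  next
    case A_inv
    have "\<bar>b - 1\<bar> \<le> of_nat p ^ length w + 1" using IH by linarith
    also have "\<dots> \<le> of_nat p * of_nat p ^ length w"
    proof -
      have "2 * of_nat p ^ length w \<le> of_nat p * (of_nat p ^ length w :: rat)"
        using p2 pp by (intro mult_right_mono) auto
      thus ?thesis using pp by linarith
    qed
    finally show ?thesis using A_inv by (simp add: eval_cons bs_mult_def b_def)
  next
    case T
    have "\<bar>of_nat p * b\<bar> \<le> of_nat p * of_nat p ^ length w" using IH
      by (simp add: abs_mult mult_left_mono)
    thus ?thesis using T by (simp add: eval_cons bs_mult_def b_def)
  next
    case T_inv
    have ppos: "(0::rat) < of_nat p" using p2 by linarith
    have "\<bar>b / of_nat p\<bar> = \<bar>b\<bar> / of_nat p" using ppos by simp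
    also have "\<dots> \<le> \<bar>b\<bar>" using ppos p2 by (simp add: divide_le_eq) (rule order_trans[of _ "\<bar>b\<bar> * 1"], simp, rule mult_left_mono, use p2 in auto)
    also have "\<dots> \<le> of_nat p * of_nat p ^ length w"
    proof -
      have "1 * of_nat p ^ length w \<le> of_nat p * (of_nat p ^ length w :: rat)"
        using p2 pp by (intro mult_right_mono) auto
      thus ?thesis using IH by linarith
    qed
    finally have "\<bar>b / of_nat p\<bar> \<le> of_nat p ^ length (x # w)" by simp
    moreover have "snd (eval_word p (x # w)) = b / of_nat p"
      using T_inv by (simp add: eval_cons bs_mult_def b_def power_int_minus divide_inverse mult.commute)
    ultimately show ?thesis by simp
  qed
qed

lemma pinv: "(of_nat p :: rat) powi (-1) = inverse (of_nat p)"
  by (simp add: power_int_minus)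
lemma eval_Tinv: "eval_word p (replicate k T_inv @ w) = (fst (eval_word p w) - int k, snd (eval_word p w) / (of_nat p) ^ k)"
proof (induction k)
  case 0 then show ?case by simp
next
  case (Suc k)
  show ?case using Suc by (simp add: eval_cons bs_mult_def pinv divide_inverse)
qed
lemma eval_T: "eval_word p (replicate k T) = (int k, 0)"
  by (induction k) (simp_all add: eval_cons bs_mult_def, simp add: eval_word_def bs_one_def)

lemma eval_A: "snd (eval_word p (replicate k A @ w)) = snd (eval_word p w) + of_nat k"
  by (induction k) (simp_all add: eval_cons bs_mult_def)

lemma eval_Ainv: "snd (eval_word p (replicate k A_inv @ w)) = snd (eval_word p w) - of_nat k"
  by (induction k) (simp_all add: eval_cons bs_mult_def)

lemma eval_apow: "snd (eval_word p (a_pow_word j @ replicate k T)) = of_int j"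
  by (simp add: a_pow_word_def eval_A eval_Ainv eval_T)
theorem lemma6p4:
  fixes p :: nat and m s n j :: int and E :: real
  assumes "p \<ge> 3"
    and "0 \<le> m" "m < n" "0 \<le> s" "s < n" "1 < E"
    and "real_of_int \<bar>j\<bar> > real p powr (E * real_of_int n)"
  shows "real (l_Gamma p (tat_word m j s)) > (E - 1) * real_of_int n"
proof -
  define g where "g = eval_word p (tat_word m j s)"
  have ex: "\<exists>w. length w = length (tat_word m j s) \<and> eval_word p w = g" unfolding g_def by (rule exI[of _ "tat_word m j s"]) simp
  have "\<exists>w. length w = word_length p g \<and> eval_word p w = g"
  proof -
    have "\<exists>n. \<exists>w. length w = n \<and> eval_word p w = g" using ex by (rule exI)
    from LeastI_ex[OF this] show ?thesis unfolding word_length_def .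
  qed
  then obtain w where w: "length w = word_length p g" "eval_word p w = g" by blast
  have sg: "snd g = of_int j / (of_nat p) ^ nat m"
    unfolding g_def tat_word_def by (simp only: eval_Tinv append_assoc eval_apow snd_conv)
  define l where "l = l_Gamma p (tat_word m j s)"
  have lw: "length w = l" using w(1) by (simp add: l_def l_Gamma_def g_def)
  have "\<bar>snd g\<bar> \<le> (of_nat p :: rat) ^ l"
    using bound_snd[of p w] assms(1) w(2) lw by simp
  hence b1: "\<bar>of_int j\<bar> / (of_nat p :: rat) ^ nat m \<le> (of_nat p :: rat) ^ l"
    by (simp add: sg)
  have ppos: "(0::rat) < of_nat p ^ nat m" using assms(1) by simp
  have "\<bar>(of_int j :: rat)\<bar> \<le> of_nat p ^ l * of_nat p ^ nat m"
    using b1 ppos by (simp add: divide_le_eq)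
  hence "\<bar>(of_int j :: rat)\<bar> \<le> of_nat p ^ (l + nat m)" by (simp add: power_add)
  hence "real_of_rat \<bar>of_int j\<bar> \<le> real_of_rat (of_nat p ^ (l + nat m))" by (simp only: of_rat_less_eq)
  hence "real_of_int \<bar>j\<bar> \<le> real p ^ (l + nat m)" by (simp add: of_rat_power flip: of_int_abs)
  also have "\<dots> = real p powr (real (l + nat m))" using assms(1)
    by (subst powr_realpow) auto
  also have "real (l + nat m) = real l + real_of_int m" using assms(2) by simp
  finally have "real p powr (E * real_of_int n) < real p powr (real l + real_of_int m)" using assms(7) by linarith
  hence "E * real_of_int n < real l + real_of_int m" using assms(1) by simp
  thus ?thesis using assms(3) by (simp add: l_def[symmetric] algebra_simps)
qed
end
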